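(* Let $\mathcal{A}$ be a complex unital structurable algebra of type $(2,1)$. Then $\mathcal{A}$ is isomorphic (as an algebra with involution) to the universal unital algebra ${\rm A}_1$ of type $(2,1)$, or to one of the following algebras with basis $\{e_1,e_2,e_3\}$, unit $e_1$, involution given by $\overline{e_1}=e_1$, $\overline{e_2}=e_2$, $\overline{e_3}=-e_3$, and multiplication table (besides $e_1e_i=e_ie_1=e_i$; all unlisted products of basis elements are zero): \begin{itemize} \item ${\rm A}_2$: $e_3e_3=e_2$; \item ${\rm A}_3$: $e_2e_2=e_2$; \item ${\rm A}_4$: $e_2e_2=e_2$, $e_3e_3=-e_1+e_2$; \item ${\rm A}_5$: $e_2e_3=e_2$, $e_3e_2=-e_2$, $e_3e_3=e_1$. \end{itemize}
   Context: An involution on an algebra $\mathcal{A}$ is a linear map $x\mapsto\overline{x}$ with $\overline{\overline{x}}=x$ and $\overline{xy}=\overline{y}\,\overline{x}$. For a unital algebra with involution write $\mathcal{A}=\mathcal{H}\oplus\mathcal{S}$ with $\mathcal{H}=\{a:\overline a=a\}$, $\mathcal{S}=\{a:\overline a=-a\}$; $\mathcal{A}$ is of type $(k,n-k)$ if $\dim\mathcal{A}=n$ and $\dim\mathcal{H}=k$. For $x,y\in\mathcal{A}$ define $V_{x,y}(z)=(x\overline{y})z+(z\overline{y})x-(z\overline{x})y$ and $T_x(z)=xz+zx-z\overline{x}$ (so $T_x=V_{x,1}$). A unital algebra with involution is structurable if $T_zV_{x,y}-V_{x,y}T_z=V_{T_z(x),y}-V_{x,T_{\overline z}(y)}$ for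 all $x,y,z$. An isomorphism of algebras with involution is a linear bijection $\varphi$ with $\varphi(xy)=\varphi(x)\varphi(y)$ and $\varphi(\overline x)=\overline{\varphi(x)}$. The universal unital algebra of type $(2,1)$ is the $3$-dimensional algebra with basis $e_1,e_2,e_3$, whose only nonzero products of basis elements are $e_1e_i=e_ie_1=e_i$, with involution $\overline{e_1}=e_1$, $\overline{e_2}=e_2$, $\overline{e_3}=-e_3$. *)

theory Defs
  imports "HOL-Analysis.Analysis"
begin

section \<open>Algebras with involution over the complex numbers (abstract carrier type)\<close>

text \<open>An algebra over the complex numbers is given by a type 'a with an additive group
structure, a complex scalar multiplication sc (forming a complex vector space), and a
bilinear product m. An involution is a linear map iv with iv (iv x) = x and
iv (m x y) = m (iv y) (iv x).\<close>

definition unital_alg_inv ::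
  "(complex \<Rightarrow> 'a::ab_group_add \<Rightarrow> 'a) \<Rightarrow> ('a \<Rightarrow> 'a \<Rightarrow> 'a) \<Rightarrow> ('a \<Rightarrow> 'a) \<Rightarrow> 'a \<Rightarrow> bool"
  where "unital_alg_inv sc m iv u \<longleftrightarrow>
     vector_space sc \<and>
     (\<forall>x. Vector_Spaces.linear sc sc (m x)) \<and>
     (\<forall>y. Vector_Spaces.linear sc sc (\<lambda>x. m x y)) \<and>
     (\<forall>x. m u x = x \<and> m x u = x) \<and>
     Vector_Spaces.linear sc sc iv \<and>
     (\<forall>x. iv (iv x) = x) \<and>
     (\<forall>x y. iv (m x y) = m (iv y) (iv x))"

text \<open>Type (k, n-k): dim A = n and dim H = k, H the hermitian (fixed) elements.\<close>

definition alg_type :: "(complex \<Rightarrow> 'a::ab_group_add \<Rightarrow> 'a) \<Rightarrow> ('a \<Rightarrow> 'a) \<Rightarrow> nat \<Rightarrow> nat \<Rightarrow> bool"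
  where "alg_type sc iv k l \<longleftrightarrow>
     vector_space.dim sc (UNIV :: 'a set) = k + l \<and>
     vector_space.dim sc {a. iv a = a} = k"

definition Vop :: "('a::ab_group_add \<Rightarrow> 'a \<Rightarrow> 'a) \<Rightarrow> ('a \<Rightarrow> 'a) \<Rightarrow> 'a \<Rightarrow> 'a \<Rightarrow> 'a \<Rightarrow> 'a"
  where "Vop m iv x y z = m (m x (iv y)) z + m (m z (iv y)) x - m (m z (iv x)) y"

definition Top :: "('a::ab_group_add \<Rightarrow> 'a \<Rightarrow> 'a) \<Rightarrow> ('a \<Rightarrow> 'a) \<Rightarrow> 'a \<Rightarrow> 'a \<Rightarrow> 'a"
  where "Top m iv x z = m x z + m z x - m z (iv x)"

definition structurable ::
  "(complex \<Rightarrow> 'a::ab_group_add \<Rightarrow> 'a) \<Rightarrow> ('a \<Rightarrow> 'a \<Rightarrow> 'a) \<Rightarrow> ('a \<Rightarrow> 'a) \<Rightarrow> 'a \<Rightarrow> bool"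
  where "structurable sc m iv u \<longleftrightarrow> unital_alg_inv sc m iv u \<and>
     (\<forall>x y z w.
        Top m iv z (Vop m iv x y w) - Vop m iv x y (Top m iv z w)
        = Vop m iv (Top m iv z x) y w - Vop m iv x (Top m iv (iv z) y) w)"

section \<open>The model algebras A1..A5 on complex^3 with basis e1, e2, e3\<close>

definition eb :: "3 \<Rightarrow> complex ^ 3" where "eb i = axis i 1"

text \<open>Products of basis elements e_i e_j in algebra A_k.\<close>
definition model_tbl :: "nat \<Rightarrow> 3 \<Rightarrow> 3 \<Rightarrow> complex ^ 3"
  where "model_tbl k i j =
    (if i = 1 then eb j
     else if j = 1 then eb i
     else if k = 2 then (if i = 3 \<and> j = 3 then eb 2 else 0)
     else if k = 3 then (if i = 2 \<and> j = 2 then eb 2 else 0)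
     else if k = 4 then (if i = 2 \<and> j = 2 then eb 2
                         else if i = 3 \<and> j = 3 then - eb 1 + eb 2 else 0)
     else if k = 5 then (if i = 2 \<and> j = 3 then eb 2
                         else if i = 3 \<and> j = 2 then - eb 2
                         else if i = 3 \<and> j = 3 then eb 1 else 0)
     else 0)"

definition model_mult :: "nat \<Rightarrow> complex ^ 3 \<Rightarrow> complex ^ 3 \<Rightarrow> complex ^ 3"
  where "model_mult k x y = (\<Sum>i\<in>UNIV. \<Sum>j\<in>UNIV. (x $ i * y $ j) *s model_tbl k i j)"

definition model_inv :: "complex ^ 3 \<Rightarrow> complex ^ 3"
  where "model_inv x = (\<chi> i. if i = 3 then - (x $ i) else x $ i)"

text \<open>Isomorphism of algebras with involution onto the model algebra A_k.\<close>
definition iso_to_model ::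
  "(complex \<Rightarrow> 'a::ab_group_add \<Rightarrow> 'a) \<Rightarrow> ('a \<Rightarrow> 'a \<Rightarrow> 'a) \<Rightarrow> ('a \<Rightarrow> 'a) \<Rightarrow> nat \<Rightarrow> ('a \<Rightarrow> complex ^ 3) \<Rightarrow> bool"
  where "iso_to_model sc m iv k \<phi> \<longleftrightarrow>
     Vector_Spaces.linear sc (*s) \<phi> \<and> bij \<phi> \<and>
     (\<forall>x y. \<phi> (m x y) = model_mult k (\<phi> x) (\<phi> y)) \<and>
     (\<forall>x. \<phi> (iv x) = model_inv (\<phi> x))"

end

theory Submission
  imports Defs
begin

lemma basis_lemma:
  fixes sc :: "complex \<Rightarrow> 'a::ab_group_add \<Rightarrow> 'a"
    and m :: "'a \<Rightarrow> 'a \<Rightarrow> 'a" and iv :: "'a \<Rightarrow> 'a" and u :: 'a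
  assumes U: "unital_alg_inv sc m iv u"
    and T: "alg_type sc iv 2 1"
  obtains h s where "iv u = u" "iv h = h" "iv s = - s"
    "\<And>x. \<exists>c1 c2 c3. x = sc c1 u + sc c2 h + sc c3 s"
    "\<And>c1 c2 c3. sc c1 u + sc c2 h + sc c3 s = 0 \<Longrightarrow> c1 = 0 \<and> c2 = 0 \<and> c3 = 0"
proof -
  interpret V: vector_space sc using U unfolding unital_alg_inv_def by blast
  have livi: "Vector_Spaces.linear sc sc iv" using U unfolding unital_alg_inv_def by blast
  have ivadd: "\<And>x y. iv (x + y) = iv x + iv y" and ivsc: "\<And>c x. iv (sc c x) = sc c (iv x)"
    using livi unfolding Vector_Spaces.linear_iff by auto
  have iv0: "iv 0 = 0" using ivadd[of 0 0] by simp
  have ivdiff: "iv (x - y) = iv x - iv y" for x y using ivadd[of "x - y" y] by (simp add: algebra_simps)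
  have ivv: "\<And>x. iv (iv x) = x" using U unfolding unital_alg_inv_def by blast
  have ivm: "\<And>x y. iv (m x y) = m (iv y) (iv x)" using U unfolding unital_alg_inv_def by blast
  have unit: "\<And>x. m u x = x \<and> m x u = x" using U unfolding unital_alg_inv_def by blast
  have ivu: "iv u = u"
  proof -
    have "m (iv u) u = iv u" using unit by blast
    moreover have "m (iv u) u = iv (m (iv u) u)"
      using ivm[of "iv u" u] unit ivv by simp
    ultimately show ?thesis using unit ivv by metis
  qed
  have lm: "Vector_Spaces.linear sc sc (\<lambda>x. m x y)" for y using U unfolding unital_alg_inv_def by blast
  have m0: "m 0 y = 0" for y
    using lm[of y] unfolding Vector_Spaces.linear_iff by (metis add_cancel_right_right)
  have dimU: "V.dim (UNIV::'a set) = 3" and dimH: "V.dim {a. iv a = a} = 2"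
    using T unfolding alg_type_def by auto
  define H where "H = {a. iv a = a}"
  have subH: "V.subspace H" unfolding H_def V.subspace_def
    using ivadd ivsc by (auto simp: iv0)
  have u0: "u \<noteq> 0"
  proof
    assume "u = 0"
    then have "x = 0" for x :: 'a using unit[of x] m0[of x] by simp
    then have "(UNIV::'a set) = {0}" by auto
    then have "V.dim (UNIV::'a set) = 0" using V.dim_eq_card[of "{}" UNIV] V.span_empty V.independent_empty V.span_UNIV by simp
    then show False using dimU by simp
  qed
  have uH: "u \<in> H" using ivu H_def by simp
  obtain B where B: "{u} \<subseteq> B" "B \<subseteq> H" "V.independent B" "H \<subseteq> V.span B"
    using V.maximal_independent_subset_extend[of "{u}" H] uH u0 by auto
  have cB: "card B = 2" using V.basis_card_eq_dim[OF B(2,4,3)] dimH H_def by simp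
  obtain h where Buh: "B = {u, h}" and hu: "h \<noteq> u"
  proof -
    have "finite B" using cB by (metis card.infinite zero_neq_numeral)
    have "B - {u} \<noteq> {}"
    proof
      assume "B - {u} = {}"
      then have "B \<subseteq> {u}" by auto
      then have "card B \<le> 1" using card_mono[of "{u}" B] by simp
      then show False using cB by simp
    qed
    then obtain h where "h \<in> B - {u}" by blast
    then have "{u,h} \<subseteq> B" using B(1) by auto
    moreover have "card {u,h} = 2" using \<open>h \<in> B - {u}\<close> by auto
    ultimately have "B = {u,h}" using cB \<open>finite B\<close> by (metis card_subset_eq)
    then show ?thesis using that \<open>h \<in> B - {u}\<close> by auto
  qed
  have hH: "iv h = h" using B(2) Buh H_def by auto
  obtain B3 where B3: "V.independent B3" "UNIV \<subseteq> V.span B3" "card B3 = 3"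
    using V.basis_exists[of UNIV] dimU by metis
  have fB3: "finite B3" using B3(3) by (metis card.infinite zero_neq_numeral)
  have "H \<noteq> UNIV" using dimH dimU H_def by auto
  then obtain x where "x \<notin> H" by auto
  define s where "s = x - iv x"
  have ivs: "iv s = - s" unfolding s_def using ivdiff ivv by simp
  have spanH: "V.span {u,h} \<subseteq> H" using B(2) Buh V.span_minimal subH by blast
  have sH: "s \<notin> H"
  proof
    assume "s \<in> H"
    then have "s = - s" using ivs H_def by simp
    then have "s + s = 0" by (metis add.right_inverse)
    moreover have "sc 2 s = s + s" using V.scale_left_distrib[of 1 1 s] by simp
    ultimately have "sc 2 s = 0" by simp
    then have "s = 0" by simp
    then show False using \<open>x \<notin> H\<close> unfolding s_def H_def by simp
  qed
  have sspan: "s \<notin> V.span {u,h}" using sH spanH by blast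
  have ind3: "V.independent {s,u,h}" using V.independent_insertI[OF sspan] B(3) Buh by simp
  have su0: "s \<noteq> u" "s \<noteq> h" using sspan V.span_base[of u "{u,h}"] V.span_base[of h "{u,h}"] by auto
  have c3: "card {s,u,h} = 3" using su0 hu by simp
  have span3: "y \<in> V.span {s,u,h}" for y
  proof (rule ccontr)
    assume ny: "y \<notin> V.span {s,u,h}"
    have "V.independent (insert y {s,u,h})" using V.independent_insertI[OF ny ind3] .
    then have "finite (insert y {s,u,h}) \<and> card (insert y {s,u,h}) \<le> card B3"
      using V.independent_span_bound[OF fB3, of "insert y {s,u,h}"] B3(2) by auto
    moreover have "y \<notin> {s,u,h}" using ny V.span_base[of y "{s,u,h}"] by blast
    then have "card (insert y {s,u,h}) = Suc (card {s,u,h})" by (intro card_insert_disjoint) auto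
    then have "card (insert y {s,u,h}) = 4" using c3 by simp
    ultimately show False using B3(3) by simp
  qed
  show ?thesis
  proof (rule that[OF ivu hH ivs])
    fix y
    show "\<exists>c1 c2 c3. y = sc c1 u + sc c2 h + sc c3 s"
    proof -
      have "y \<in> V.span {s,u,h}" by (rule span3)
      then obtain k1 where "y - sc k1 s \<in> V.span {u,h}" using V.span_breakdown_eq by blast
      then obtain k2 where "y - sc k1 s - sc k2 u \<in> V.span {h}" using V.span_breakdown_eq by blast
      then obtain k3 where "y - sc k1 s - sc k2 u - sc k3 h \<in> V.span {}" using V.span_breakdown_eq by blast
      then have "y = sc k2 u + sc k3 h + sc k1 s" by (simp add: algebra_simps)
      then show ?thesis by blast
    qed
  next
    fix c1 c2 c3
    assume eq: "sc c1 u + sc c2 h + sc c3 s = 0"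
    define f where "f v = (if v = u then c1 else if v = h then c2 else c3)" for v
    note su = su0
    have "(\<Sum>v\<in>{s,u,h}. sc (f v) v) = 0"
      using eq su hu by (simp add: f_def algebra_simps)
    then have "\<forall>v\<in>{s,u,h}. f v = 0"
      using V.independentD[OF ind3, of "{s,u,h}" f] by auto
    then show "c1 = 0 \<and> c2 = 0 \<and> c3 = 0" using su hu by (auto simp: f_def split: if_splits)
  qed
qed


definition Mf :: "(3 \<Rightarrow> 3 \<Rightarrow> complex^3) \<Rightarrow> complex^3 \<Rightarrow> complex^3 \<Rightarrow> complex^3"
  where "Mf T x y = (\<Sum>i\<in>UNIV. \<Sum>j\<in>UNIV. (x$i * y$j) *s T i j)"

definition Tp :: "complex \<Rightarrow> complex \<Rightarrow> complex \<Rightarrow> complex \<Rightarrow> complex \<Rightarrow> complex \<Rightarrow> complex \<Rightarrow> 3 \<Rightarrow> 3 \<Rightarrow> complex^3"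
  where "Tp a b c d p q r i j = (if i = 1 then eb j else if j = 1 then eb i
     else if i = 2 \<and> j = 2 then vector [a,b,0] else if i = 2 \<and> j = 3 then vector [p,q,r]
     else if i = 3 \<and> j = 2 then vector [-p,-q,r] else vector [c,d,0])"

lemma eb_nth[simp]: "eb i $ j = (if j = i then 1 else 0)"
  by (simp add: eb_def axis_def)

lemma Mf_nth: "Mf T x y $ k = (\<Sum>i\<in>UNIV. \<Sum>j\<in>UNIV. x$i * y$j * T i j $ k)"
  by (simp add: Mf_def sum_component)

lemma Tp_nth: "Tp a b c d p q r i j $ k = (if i = 1 then (if k = j then 1 else 0) else if j = 1 then (if k = i then 1 else 0)
     else if i = 2 \<and> j = 2 then (if k = 1 then a else if k = 2 then b else 0)
     else if i = 2 \<and> j = 3 then (if k = 1 then p else if k = 2 then q else r)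
     else if i = 3 \<and> j = 2 then (if k = 1 then -p else if k = 2 then -q else r)
     else (if k = 1 then c else if k = 2 then d else 0))"
  using exhaust_3[of k] by (auto simp: Tp_def)

lemma model_inv_nth: "model_inv x $ k = (if k = 3 then - x $ k else x $ k)"
  by (simp add: model_inv_def)

lemma inst1:
  fixes a b c d p q r :: complex
  defines "M \<equiv> Mf (Tp a b c d p q r)"
  assumes "Top M model_inv z (Vop M model_inv x y w) - Vop M model_inv x y (Top M model_inv z w)
        = Vop M model_inv (Top M model_inv z x) y w - Vop M model_inv x (Top M model_inv (model_inv z) y) w"
   and "x = eb 1" "y = eb 3" "z = eb 2" "w = eb 2"
  shows "-6*q*r + 2*p + 4*b*q = 0" "-4*r^2 + 4*b*r + 4*a = 0"
proof -
  have "(Top M model_inv z (Vop M model_inv x y w) - Vop M model_inv x y (Top M model_inv z w)) $ k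
        = (Vop M model_inv (Top M model_inv z x) y w - Vop M model_inv x (Top M model_inv (model_inv z) y) w) $ k" for k
    using assms(2) by simp
  note e = this[of 2] this[of 3]
  show "-6*q*r + 2*p + 4*b*q = 0" using e(1) unfolding assms(3-6) M_def
    by (simp add: Top_def Vop_def Mf_nth Tp_nth model_inv_nth sum_3 algebra_simps)
  show "-4*r^2 + 4*b*r + 4*a = 0" using e(2) unfolding assms(3-6) M_def
    by (simp add: Top_def Vop_def Mf_nth Tp_nth model_inv_nth sum_3 algebra_simps power2_eq_square)
qed

lemma inst2:
  fixes a b c d p q r :: complex
  defines "M \<equiv> Mf (Tp a b c d p q r)"
  assumes "Top M model_inv z (Vop M model_inv x y w) - Vop M model_inv x y (Top M model_inv z w)
        = Vop M model_inv (Top M model_inv z x) y w - Vop M model_inv x (Top M model_inv (model_inv z) y) w"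
   and "x = eb 1" "y = eb 3" "z = eb 2" "w = eb 3"
  shows "2*q^2 + 2*d*r - 2*c - 2*b*d = 0" "4*q*r + 4*p = 0"
proof -
  have "(Top M model_inv z (Vop M model_inv x y w) - Vop M model_inv x y (Top M model_inv z w)) $ k
        = (Vop M model_inv (Top M model_inv z x) y w - Vop M model_inv x (Top M model_inv (model_inv z) y) w) $ k" for k
    using assms(2) by simp
  note e = this[of 2] this[of 3]
  show "2*q^2 + 2*d*r - 2*c - 2*b*d = 0" using e(1) unfolding assms(3-6) M_def
    by (simp add: Top_def Vop_def Mf_nth Tp_nth model_inv_nth sum_3 algebra_simps power2_eq_square)
  show "4*q*r + 4*p = 0" using e(2) unfolding assms(3-6) M_def
    by (simp add: Top_def Vop_def Mf_nth Tp_nth model_inv_nth sum_3 algebra_simps power2_eq_square)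
qed

lemma inst3:
  fixes a b c d p q r :: complex
  defines "M \<equiv> Mf (Tp a b c d p q r)"
  assumes "Top M model_inv z (Vop M model_inv x y w) - Vop M model_inv x y (Top M model_inv z w)
        = Vop M model_inv (Top M model_inv z x) y w - Vop M model_inv x (Top M model_inv (model_inv z) y) w"
   and "x = eb 3" "y = eb 3" "z = eb 3" "w = eb 1"
  shows "8*d*q = 0"
proof -
  have "(Top M model_inv z (Vop M model_inv x y w) - Vop M model_inv x y (Top M model_inv z w)) $ k
        = (Vop M model_inv (Top M model_inv z x) y w - Vop M model_inv x (Top M model_inv (model_inv z) y) w) $ k" for k
    using assms(2) by simp
  note e = this[of 2]
  show "8*d*q = 0" using e(1) unfolding assms(3-6) M_def
    by (simp add: Top_def Vop_def Mf_nth Tp_nth model_inv_nth sum_3 algebra_simps power2_eq_square)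
qed

definition Lm :: "complex \<Rightarrow> complex \<Rightarrow> complex \<Rightarrow> complex^3 \<Rightarrow> complex^3"
  where "Lm r l n x = vector [x$1 + r * x$2, l * x$2, n * x$3]"

lemma Lm_nth: "Lm r l n x $ k = (if k = 1 then x$1 + r * x$2 else if k = 2 then l * x$2 else n * x$3)"
  using exhaust_3[of k] by (auto simp: Lm_def)

lemma model_mult_nth: "model_mult k x y $ l = (\<Sum>i\<in>UNIV. \<Sum>j\<in>UNIV. x$i * y$j * model_tbl k i j $ l)"
  by (simp add: model_mult_def sum_component)

lemma tbl_nth: "model_tbl k i j $ l = (if i = 1 then (if l = j then 1 else 0)
     else if j = 1 then (if l = i then 1 else 0)
     else if k = 2 then (if i = 3 \<and> j = 3 \<and> l = 2 then 1 else 0)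
     else if k = 3 then (if i = 2 \<and> j = 2 \<and> l = 2 then 1 else 0)
     else if k = 4 then (if i = 2 \<and> j = 2 then (if l = 2 then 1 else 0)
                         else if i = 3 \<and> j = 3 then (if l = 1 then -1 else if l = 2 then 1 else 0) else 0)
     else if k = 5 then (if i = 2 \<and> j = 3 then (if l = 2 then 1 else 0)
                         else if i = 3 \<and> j = 2 then (if l = 2 then -1 else 0)
                         else if i = 3 \<and> j = 3 then (if l = 1 then 1 else 0) else 0)
     else 0)"
  by (simp add: model_tbl_def)


lemma iso_A1:
  shows "Lm r 1 1 (Mf (Tp (- (r^2)) (2*r) 0 0 0 0 r) x y) = model_mult 1 (Lm r 1 1 x) (Lm r 1 1 y)"
  unfolding vec_eq_iff forall_3
  by (simp add: Lm_nth Mf_nth Tp_nth model_mult_nth tbl_nth sum_3 algebra_simps power2_eq_square)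

lemma iso_A2:
  assumes "d \<noteq> 0"
  shows "Lm r (1/d) 1 (Mf (Tp (- (r^2)) (2*r) (- (d*r)) d 0 0 r) x y) = model_mult 2 (Lm r (1/d) 1 x) (Lm r (1/d) 1 y)"
  unfolding vec_eq_iff forall_3 using assms
  by (simp add: Lm_nth Mf_nth Tp_nth model_mult_nth tbl_nth sum_3 algebra_simps power2_eq_square; simp add: field_simps)

lemma iso_A3:
  shows "Lm r (b-2*r) 1 (Mf (Tp (r^2-b*r) b 0 0 0 0 r) x y) = model_mult 3 (Lm r (b-2*r) 1 x) (Lm r (b-2*r) 1 y)"
  unfolding vec_eq_iff forall_3
  by (simp add: Lm_nth Mf_nth Tp_nth model_mult_nth tbl_nth sum_3 algebra_simps power2_eq_square)

lemma iso_A4: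
  assumes "g*g = d*(b-2*r)"
  shows "Lm r (b-2*r) g (Mf (Tp (r^2-b*r) b (d*r-b*d) d 0 0 r) x y) = model_mult 4 (Lm r (b-2*r) g x) (Lm r (b-2*r) g y)"
  unfolding vec_eq_iff forall_3 
  by (simp add: Lm_nth Mf_nth Tp_nth model_mult_nth tbl_nth sum_3 algebra_simps power2_eq_square; simp add: mult.assoc[symmetric] assms; simp add: algebra_simps)

lemma iso_A5:
  shows "Lm r 1 q (Mf (Tp (- (r^2)) (2*r) (q^2) 0 (- (q*r)) q r) x y) = model_mult 5 (Lm r 1 q x) (Lm r 1 q y)"
  unfolding vec_eq_iff forall_3
  by (simp add: Lm_nth Mf_nth Tp_nth model_mult_nth tbl_nth sum_3 algebra_simps power2_eq_square)


lemma Lm_inv: "Lm r l n (model_inv x) = model_inv (Lm r l n x)"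
  unfolding vec_eq_iff forall_3 by (simp add: Lm_nth model_inv_nth)

lemma vs3: "vector_space ((*s) :: complex \<Rightarrow> complex^3 \<Rightarrow> complex^3)"
  by (rule vec.vector_space_axioms)

lemma Lm_linear: "Vector_Spaces.linear (*s) (*s) (Lm r l n)"
  unfolding Vector_Spaces.linear_iff using vs3
  by (auto simp: vec_eq_iff forall_3 Lm_nth algebra_simps)

lemma Lm_bij:
  assumes "l \<noteq> 0" "n \<noteq> 0"
  shows "bij (Lm r l n)"
proof (rule bijI)
  show "inj (Lm r l n)"
  proof
    fix x y assume "Lm r l n x = Lm r l n y"
    then have "x$2 = y$2 \<and> x$3 = y$3 \<and> x$1 + r * x$2 = y$1 + r * y$2"
      using assms by (auto simp: vec_eq_iff forall_3 Lm_nth)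
    then show "x = y" by (auto simp: vec_eq_iff forall_3)
  qed
  show "surj (Lm r l n)"
  proof (rule surjI)
    fix x
    show "Lm r l n (vector [x$1 - r * x$2 / l, x$2 / l, x$3 / n]) = x"
      using assms by (simp add: vec_eq_iff forall_3 Lm_nth)
  qed
qed

lemma Mf_eb: "Mf T (eb i) (eb j) = T i j"
  using exhaust_3[of i] exhaust_3[of j] by (auto simp: Mf_def sum_3)

lemma classify_coord:
  fixes T :: "3 \<Rightarrow> 3 \<Rightarrow> complex^3"
  assumes h1: "\<And>j. T 1 j = eb j" and h2: "\<And>i. T i 1 = eb i"
    and h3: "\<And>x y. model_inv (Mf T x y) = Mf T (model_inv y) (model_inv x)"
    and h4: "\<And>x y z w. Top (Mf T) model_inv z (Vop (Mf T) model_inv x y w) - Vop (Mf T) model_inv x y (Top (Mf T) model_inv z w)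
        = Vop (Mf T) model_inv (Top (Mf T) model_inv z x) y w - Vop (Mf T) model_inv x (Top (Mf T) model_inv (model_inv z) y) w"
  shows "\<exists>k\<in>{1,2,3,4,5::nat}. \<exists>L. (\<forall>x y. L (Mf T x y) = model_mult k (L x) (L y))
     \<and> (\<forall>x. L (model_inv x) = model_inv (L x)) \<and> Vector_Spaces.linear (*s) (*s) L \<and> bij L"
proof -
  define a where "a = T 2 2 $ 1"
  define b where "b = T 2 2 $ 2"
  define c where "c = T 3 3 $ 1"
  define d where "d = T 3 3 $ 2"
  define p where "p = T 2 3 $ 1"
  define q where "q = T 2 3 $ 2"
  define r where "r = T 2 3 $ 3"
  have mi2: "model_inv (eb 2) = eb 2" and mi3: "model_inv (eb 3) = - eb 3"
    by (simp_all add: vec_eq_iff forall_3 model_inv_nth)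
  have Mneg: "Mf T (- x) y = - Mf T x y" "Mf T x (- y) = - Mf T x y" for x y
    by (simp_all add: Mf_def sum_negf)
  have i22: "model_inv (T 2 2) = T 2 2" using h3[of "eb 2" "eb 2"] by (simp add: Mf_eb mi2)
  have i33: "model_inv (T 3 3) = T 3 3" using h3[of "eb 3" "eb 3"] by (simp add: Mf_eb mi3 Mneg)
  have i23: "model_inv (T 2 3) = - T 3 2" using h3[of "eb 2" "eb 3"] by (simp add: Mf_eb mi2 mi3 Mneg)
  have T22: "T 2 2 $ 3 = 0" using arg_cong[OF i22, of "\<lambda>v. v $ 3"] by (simp add: model_inv_nth)
  have T33: "T 3 3 $ 3 = 0" using arg_cong[OF i33, of "\<lambda>v. v $ 3"] by (simp add: model_inv_nth)
  have T32: "T 3 2 $ k = (if k = 3 then T 2 3 $ 3 else - T 2 3 $ k)" for k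
    using arg_cong[OF i23, of "\<lambda>v. v $ k"] by (auto simp: model_inv_nth split: if_splits)
  have TT: "T = Tp a b c d p q r"
  proof (intro ext)
    fix i j :: 3
    show "T i j = Tp a b c d p q r i j"
      using exhaust_3[of i] exhaust_3[of j]
      by (auto simp: vec_eq_iff forall_3 Tp_nth h1 h2 T22 T33 T32 a_def b_def c_def d_def p_def q_def r_def)
  qed
  have S: "\<And>x y z w. Top (Mf (Tp a b c d p q r)) model_inv z (Vop (Mf (Tp a b c d p q r)) model_inv x y w) - Vop (Mf (Tp a b c d p q r)) model_inv x y (Top (Mf (Tp a b c d p q r)) model_inv z w)
        = Vop (Mf (Tp a b c d p q r)) model_inv (Top (Mf (Tp a b c d p q r)) model_inv z x) y w - Vop (Mf (Tp a b c d p q r)) model_inv x (Top (Mf (Tp a b c d p q r)) model_inv (model_inv z) y) w"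
    using h4 unfolding TT .
  have E1: "-6*q*r + 2*p + 4*b*q = 0" and E2: "-4*r^2 + 4*b*r + 4*a = 0"
    using inst1[OF S refl refl refl refl] by auto
  have E3: "2*q^2 + 2*d*r - 2*c - 2*b*d = 0" and E4: "4*q*r + 4*p = 0"
    using inst2[OF S refl refl refl refl] by auto
  have E5: "8*d*q = 0" using inst3[OF S refl refl refl refl] by auto
  have pe: "p = - (q*r)" using E4 by algebra
  have ae: "a = r^2 - b*r" using E2 by algebra
  have ce: "c = q^2 + d*r - b*d" using E3 by algebra
  have dq: "d = 0 \<or> q = 0" using E5 by simp
  have qb: "q = 0 \<or> b = 2*r" using E1 unfolding pe by algebra
  show ?thesis
  proof (cases "q = 0")
    case q0: True
    show ?thesis
    proof (cases "b = 2*r")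
      case bt: True
      show ?thesis
      proof (cases "d = 0")
        case True
        have "T = Tp (- (r^2)) (2*r) 0 0 0 0 r" unfolding TT using q0 bt True pe ae ce
          by (simp add: power2_eq_square algebra_simps)
        then show ?thesis using iso_A1 Lm_inv Lm_linear Lm_bij[of 1 1 r] by (intro bexI[of _ 1] exI[of _ "Lm r 1 1"]) auto
      next
        case False
        have "T = Tp (- (r^2)) (2*r) (- (d*r)) d 0 0 r" unfolding TT using q0 bt pe ae ce
          by (simp add: power2_eq_square algebra_simps)
        then show ?thesis using iso_A2[OF False] Lm_inv Lm_linear Lm_bij[of "1/d" 1 r] False
          by (intro bexI[of _ 2] exI[of _ "Lm r (1/d) 1"]) auto
      qed
    next
      case bt: False
      then have t0: "b - 2*r \<noteq> 0" by simp
      show ?thesis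
      proof (cases "d = 0")
        case True
        have "T = Tp (r^2 - b*r) b 0 0 0 0 r" unfolding TT ae pe ce using q0 True
          by (simp add: power2_eq_square algebra_simps)
        then show ?thesis using iso_A3 Lm_inv Lm_linear Lm_bij[of "b-2*r" 1 r] t0
          by (intro bexI[of _ 3] exI[of _ "Lm r (b-2*r) 1"]) auto
      next
        case False
        define g where "g = csqrt (d*(b-2*r))"
        have gg: "g*g = d*(b-2*r)" unfolding g_def by (metis power2_csqrt power2_eq_square)
        have g0: "g \<noteq> 0" using gg False t0 by auto
        have "T = Tp (r^2 - b*r) b (d*r - b*d) d 0 0 r" unfolding TT ae pe ce using q0
          by (simp add: power2_eq_square algebra_simps)
        then show ?thesis using iso_A4[OF gg] Lm_inv Lm_linear Lm_bij[of "b-2*r" g r] t0 g0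
          by (intro bexI[of _ 4] exI[of _ "Lm r (b-2*r) g"]) auto
      qed
    qed
  next
    case False
    then have d0: "d = 0" and bt: "b = 2*r" using dq qb by auto
    have "T = Tp (- (r^2)) (2*r) (q^2) 0 (- (q*r)) q r" unfolding TT using d0 bt pe ae ce
      by (simp add: power2_eq_square algebra_simps)
    then show ?thesis using iso_A5 Lm_inv Lm_linear Lm_bij[of 1 q r] False
      by (intro bexI[of _ 5] exI[of _ "Lm r 1 q"]) auto
  qed
qed


theorem mainTheorem1:
  fixes sc :: "complex \<Rightarrow> 'a::ab_group_add \<Rightarrow> 'a"
    and m :: "'a \<Rightarrow> 'a \<Rightarrow> 'a" and iv :: "'a \<Rightarrow> 'a" and u :: 'a
  assumes "structurable sc m iv u"
    and "alg_type sc iv 2 1"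
  shows "\<exists>k\<in>{1,2,3,4,5::nat}. \<exists>\<phi>. iso_to_model sc m iv k \<phi>"
proof -
  have U: "unital_alg_inv sc m iv u" using assms(1) unfolding structurable_def by blast
  have Str: "\<And>x y z w. Top m iv z (Vop m iv x y w) - Vop m iv x y (Top m iv z w)
        = Vop m iv (Top m iv z x) y w - Vop m iv x (Top m iv (iv z) y) w"
    using assms(1) unfolding structurable_def by blast
  obtain h s where ivu: "iv u = u" and ivh: "iv h = h" and ivs: "iv s = - s"
    and rep: "\<And>x. \<exists>c1 c2 c3. x = sc c1 u + sc c2 h + sc c3 s"
    and uniq: "\<And>c1 c2 c3. sc c1 u + sc c2 h + sc c3 s = 0 \<Longrightarrow> c1 = 0 \<and> c2 = 0 \<and> c3 = 0"
    using basis_lemma[OF U assms(2)] by blast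
  have vsc: "vector_space sc" using U unfolding unital_alg_inv_def by blast
  interpret V: vector_space sc by (rule vsc)
  have livi: "Vector_Spaces.linear sc sc iv" using U unfolding unital_alg_inv_def by blast
  have ivadd: "\<And>x y. iv (x + y) = iv x + iv y" and ivsc: "\<And>c x. iv (sc c x) = sc c (iv x)"
    using livi unfolding Vector_Spaces.linear_iff by auto
  have lm1: "Vector_Spaces.linear sc sc (\<lambda>x. m x y)" for y using U unfolding unital_alg_inv_def by blast
  have lm2: "Vector_Spaces.linear sc sc (m x)" for x using U unfolding unital_alg_inv_def by blast
  have madd1: "m (x + y) z = m x z + m y z" and msc1: "m (sc c x) z = sc c (m x z)" for x y z c
    using lm1[of z] unfolding Vector_Spaces.linear_iff by auto
  have madd2: "m z (x + y) = m z x + m z y" and msc2: "m z (sc c x) = sc c (m z x)" for x y z c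
    using lm2[of z] unfolding Vector_Spaces.linear_iff by auto
  have unit: "\<And>x. m u x = x \<and> m x u = x" using U unfolding unital_alg_inv_def by blast
  have ivm: "\<And>x y. iv (m x y) = m (iv y) (iv x)" using U unfolding unital_alg_inv_def by blast
  define C where "C c = sc (c$1) u + sc (c$2) h + sc (c$3) s" for c :: "complex^3"
  have Cadd: "C (x + y) = C x + C y" for x y
    by (simp add: C_def V.scale_left_distrib algebra_simps)
  have Csc: "C (k *s x) = sc k (C x)" for k x
    by (simp add: C_def V.scale_right_distrib)
  have Cdiff: "C (x - y) = C x - C y" for x y
    using Cadd[of "x - y" y] by (simp add: algebra_simps)
  have Csurj: "\<exists>c. C c = x" for x
  proof -
    obtain c1 c2 c3 where "x = sc c1 u + sc c2 h + sc c3 s" using rep by blast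
    then have "C (vector [c1, c2, c3]) = x" by (simp add: C_def)
    then show ?thesis by blast
  qed
  have Cinj: "x = y" if "C x = C y" for x y
  proof -
    have "C (x - y) = 0" using that Cdiff by simp
    then have "(x - y) $ 1 = 0 \<and> (x - y) $ 2 = 0 \<and> (x - y) $ 3 = 0" using uniq unfolding C_def by blast
    then show ?thesis by (simp add: vec_eq_iff forall_3)
  qed
  define Ci where "Ci = inv C"
  have CCi: "C (Ci x) = x" for x unfolding Ci_def by (metis Csurj f_inv_into_f rangeI)
  have CiC: "Ci (C x) = x" for x using CCi Cinj by metis
  have Ce: "C (eb 1) = u" "C (eb 2) = h" "C (eb 3) = s" by (simp_all add: C_def)
  define T where "T i j = Ci (m (C (eb i)) (C (eb j)))" for i j
  have CT: "C (T i j) = m (C (eb i)) (C (eb j))" for i j unfolding T_def CCi ..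
  have Cm: "m (C x) (C y) = C (Mf T x y)" for x y
  proof -
    have "C (Mf T x y) = sc (x$1 * y$1) (m u u) + sc (x$1 * y$2) (m u h) + sc (x$1 * y$3) (m u s)
       + sc (x$2 * y$1) (m h u) + sc (x$2 * y$2) (m h h) + sc (x$2 * y$3) (m h s)
       + sc (x$3 * y$1) (m s u) + sc (x$3 * y$2) (m s h) + sc (x$3 * y$3) (m s s)"
      by (simp add: Mf_def sum_3 Cadd Csc CT Ce add.assoc)
    also have "\<dots> = m (C x) (C y)"
      unfolding C_def by (simp add: madd1 madd2 msc1 msc2 V.scale_scale V.scale_right_distrib add_ac mult.commute)
    finally show ?thesis by simp
  qed
  have Civ: "iv (C x) = C (model_inv x)" for x
    by (simp add: C_def ivadd ivsc ivu ivh ivs model_inv_def)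
  have h1: "T 1 j = eb j" for j unfolding T_def Ce using unit CiC by simp
  have h2: "T i 1 = eb i" for i unfolding T_def Ce using unit CiC by simp
  have h3: "model_inv (Mf T x y) = Mf T (model_inv y) (model_inv x)" for x y
  proof (rule Cinj)
    show "C (model_inv (Mf T x y)) = C (Mf T (model_inv y) (model_inv x))"
      by (simp add: Civ[symmetric] Cm[symmetric] ivm)
  qed
  have CTop: "Top m iv (C x) (C z) = C (Top (Mf T) model_inv x z)" for x z
    by (simp add: Top_def Cadd Cdiff Cm Civ)
  have CVop: "Vop m iv (C x) (C y) (C z) = C (Vop (Mf T) model_inv x y z)" for x y z
    by (simp add: Vop_def Cadd Cdiff Cm Civ)
  have h4: "Top (Mf T) model_inv z (Vop (Mf T) model_inv x y w) - Vop (Mf T) model_inv x y (Top (Mf T) model_inv z w)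
        = Vop (Mf T) model_inv (Top (Mf T) model_inv z x) y w - Vop (Mf T) model_inv x (Top (Mf T) model_inv (model_inv z) y) w" for x y z w
  proof (rule Cinj)
    show "C (Top (Mf T) model_inv z (Vop (Mf T) model_inv x y w) - Vop (Mf T) model_inv x y (Top (Mf T) model_inv z w))
        = C (Vop (Mf T) model_inv (Top (Mf T) model_inv z x) y w - Vop (Mf T) model_inv x (Top (Mf T) model_inv (model_inv z) y) w)"
      using Str[where x="C x" and y="C y" and z="C z" and w="C w"] by (simp add: Cdiff CTop[symmetric] CVop[symmetric] Civ[symmetric])
  qed
  obtain k L where k: "k \<in> {1,2,3,4,5::nat}" and Lm: "\<And>x y. L (Mf T x y) = model_mult k (L x) (L y)"
    and Li: "\<And>x. L (model_inv x) = model_inv (L x)" and Ll: "Vector_Spaces.linear (*s) (*s) L" and Lb: "bij L"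
    using classify_coord[OF h1 h2 h3 h4] by blast
  have Ladd: "L (x + y) = L x + L y" and Lsc: "L (c *s x) = c *s L x" for x y c
    using Ll unfolding Vector_Spaces.linear_iff by auto
  have Ciadd: "Ci (x + y) = Ci x + Ci y" for x y by (rule Cinj) (simp add: CCi Cadd)
  have Cisc: "Ci (sc c x) = c *s Ci x" for x c by (rule Cinj) (simp add: CCi Csc)
  define \<phi> where "\<phi> x = L (Ci x)" for x
  have "iso_to_model sc m iv k \<phi>"
    unfolding iso_to_model_def
  proof (intro conjI allI)
    show "Vector_Spaces.linear sc (*s) \<phi>"
      unfolding Vector_Spaces.linear_iff using vsc vs3 by (simp add: \<phi>_def Ciadd Cisc Ladd Lsc)
    have "bij Ci" unfolding Ci_def using Cinj Csurj by (metis bij_betw_inv_into bijI injI surjI)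
    then show "bij \<phi>" using Lb unfolding \<phi>_def using bij_comp[of Ci L] by (simp add: comp_def)
  next
    fix x y
    have "m x y = C (Mf T (Ci x) (Ci y))" using Cm[of "Ci x" "Ci y"] CCi by simp
    then show "\<phi> (m x y) = model_mult k (\<phi> x) (\<phi> y)" by (simp add: \<phi>_def CiC Lm)
  next
    fix x
    have "iv x = C (model_inv (Ci x))" using Civ[of "Ci x"] CCi by simp
    then show "\<phi> (iv x) = model_inv (\<phi> x)" by (simp add: \<phi>_def CiC Li)
  qed
  then show ?thesis using k by blast
qed

end
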